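(* Let $d\ge 3$ and $0\le j\le \left\lfloor \frac{3(d-1)}{2}\right\rfloor$. The elements of $\operatorname{Ker}(E)\cap A(d)_j$ on which every $\sigma\in S_3$ acts by $\operatorname{sgn}(\sigma)$ are exactly the elements $P=\sum_{\mu\in\mathscr{P}^+_{3,d-1}(j)}\beta_\mu\langle x^\mu\rangle$ ($\beta_\mu\in\Bbbk$) with $E(P)=0$, and the multiplicity of the sign representation in $\operatorname{Ker}(E)\cap A(d)_j$ is $$\operatorname{sign}(d,j)=p^+_{3,d-1}(j)-p^+_{3,d-1}(j-1).$$
   Context: $\Bbbk$ is an algebraically closed field of characteristic $0$. For an integer $d\ge 1$, $A(d)=\Bbbk[x_1,x_2,x_3]/(x_1^d,x_2^d,x_3^d)=\bigoplus_j A(d)_j$ with its standard grading. The symmetric group $S_3$ acts on $A(d)$ by permuting the variables. The linear map $E:A(d)_{j+1}\to A(d)_j$ is defined on the monomial basis by $E(x_1^{a_1}x_2^{a_2}x_3^{a_3})=\sum_{k=1}^{3} a_k(d-a_k)\,x_1^{a_1}\cdots x_k^{a_k-1}\cdots x_3^{a_3}$; it commutes with the $S_3$-action. $\operatorname{sign}(d,j)$ denotes the multiplicity of the sign representation in $\operatorname{Ker}(E)\cap A(d)_j$. For integers $l\ge0$, $n$: $\mathscr{P}^+_{3,l}(n)$ is the set of integer triples $(a,b,c)$ with $l\ge a> b> c\ge 0$ and $a+b+c=n$, and $p^+_{3,l}(n)=|\mathscr{P}^+_{3,l}(n)|$ ($=0$ for $n<0$). For $\mu=(a,b,c)$, $\langle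 x^\mu\rangle=\sum_{\sigma\in S_3}\operatorname{sgn}(\sigma)\,\sigma(x_1^ax_2^bx_3^c)$. *)

theory Defs
  imports Main "HOL-Computational_Algebra.Polynomial" "HOL-Combinatorics.Permutations"
    "HOL-Library.Function_Algebras"
begin

text \<open>Monomials x1^(e 0) x2^(e 1) x3^(e 2) of A(d) are encoded by exponent functions
  e :: nat => nat with e i = 0 for i >= 3; an element of A(d) is its coefficient function
  (exponent function => field element), supported on exponents with e i < d.
  Variables x_1, x_2, x_3 correspond to indices 0, 1, 2.\<close>

type_synonym expo = "nat \<Rightarrow> nat"

definition mons :: "nat \<Rightarrow> nat \<Rightarrow> expo set" where
  "mons d j = {e. (\<forall>i\<ge>3. e i = 0) \<and> (\<forall>i<3. e i < d) \<and> e 0 + e 1 + e 2 = j}"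

definition Adeg :: "nat \<Rightarrow> nat \<Rightarrow> (expo \<Rightarrow> 'k::field) set" where
  "Adeg d j = {P. \<forall>e. e \<notin> mons d j \<longrightarrow> P e = 0}"

text \<open>The operator E, written on coefficients: the coefficient of x^e in E(P) collects
  the contributions a_k (d - a_k) of the monomials x^(e + e_k), with a_k = e k + 1.\<close>
definition Eop :: "nat \<Rightarrow> (expo \<Rightarrow> 'k::field) \<Rightarrow> (expo \<Rightarrow> 'k)" where
  "Eop d P = (\<lambda>e. \<Sum>k<3. of_nat ((e k + 1) * (d - (e k + 1))) * P (e(k := e k + 1)))"

text \<open>Action of a permutation sigma of {0,1,2} (variables) on A(d):
  sigma (x1^a1 x2^a2 x3^a3) = x_{sigma 1}^a1 x_{sigma 2}^a2 x_{sigma 3}^a3,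
  i.e. on coefficient functions (sigma . P)(e) = P (e o sigma).\<close>
definition act :: "(nat \<Rightarrow> nat) \<Rightarrow> (expo \<Rightarrow> 'k::field) \<Rightarrow> (expo \<Rightarrow> 'k)" where
  "act \<sigma> P = (\<lambda>e. P (e \<circ> \<sigma>))"

definition sign_isotypic :: "(expo \<Rightarrow> 'k::field) \<Rightarrow> bool" where
  "sign_isotypic P \<longleftrightarrow> (\<forall>\<sigma>. \<sigma> permutes {0,1,2::nat} \<longrightarrow> act \<sigma> P = (\<lambda>e. of_int (sign \<sigma>) * P e))"

definition kerE :: "nat \<Rightarrow> nat \<Rightarrow> (expo \<Rightarrow> 'k::field) set" where
  "kerE d j = {P \<in> Adeg d j. Eop d P = 0}"

definition sign_part :: "nat \<Rightarrow> nat \<Rightarrow> (expo \<Rightarrow> 'k::field) set" where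
  "sign_part d j = {P \<in> kerE d j. sign_isotypic P}"

text \<open>Multiplicity of the (one-dimensional) sign representation in Ker(E) cap A(d)_j:
  the dimension over k of the sign-isotypic subspace.\<close>
definition sign_mult :: "'k::field itself \<Rightarrow> nat \<Rightarrow> nat \<Rightarrow> nat" where
  "sign_mult _ d j = vector_space.dim (\<lambda>(c::'k) (f::expo \<Rightarrow> 'k). (\<lambda>x. c * f x)) (sign_part d j)"

definition Pplus :: "nat \<Rightarrow> int \<Rightarrow> (nat \<times> nat \<times> nat) set" where
  "Pplus l n = {(a, b, c). l \<ge> a \<and> a > b \<and> b > c \<and> int (a + b + c) = n}"

definition pplus :: "nat \<Rightarrow> int \<Rightarrow> nat" where
  "pplus l n = card (Pplus l n)"

definition expo_of :: "nat \<times> nat \<times> nat \<Rightarrow> expo" where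
  "expo_of \<mu> = (case \<mu> of (a, b, c) \<Rightarrow> (\<lambda>i. if i = 0 then a else if i = 1 then b else if i = 2 then c else 0))"

definition monom3 :: "nat \<times> nat \<times> nat \<Rightarrow> (expo \<Rightarrow> 'k::field)" where
  "monom3 \<mu> = (\<lambda>e. if e = expo_of \<mu> then 1 else 0)"

definition alt :: "nat \<times> nat \<times> nat \<Rightarrow> (expo \<Rightarrow> 'k::field)" where
  "alt \<mu> = (\<Sum>\<sigma>\<in>{\<sigma>. \<sigma> permutes {0,1,2::nat}}. (\<lambda>e. of_int (sign \<sigma>) * act \<sigma> (monom3 \<mu>) e))"

end

theory Submission
  imports Defs
begin
lemma perm3_cases:
  assumes "\<sigma> permutes {0,1,2::nat}"
  shows "\<sigma> = id \<or> \<sigma> = transpose 0 1 \<or> \<sigma> = transpose 0 2 \<or> \<sigma> = transpose 1 2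
    \<or> \<sigma> = transpose 0 1 \<circ> transpose 1 2 \<or> \<sigma> = transpose 1 2 \<circ> transpose 0 1"
proof -
  have out: "\<And>x. x \<notin> {0,1,2} \<Longrightarrow> \<sigma> x = x" using assms by (simp add: permutes_def)
  have inr: "\<And>x. x \<in> {0,1,2} \<Longrightarrow> \<sigma> x \<in> {0,1,2}" using permutes_in_image[OF assms] by metis
  have inj: "inj \<sigma>" using assms permutes_inj by blast
  have d: "\<sigma> 0 \<noteq> \<sigma> 1" "\<sigma> 0 \<noteq> \<sigma> 2" "\<sigma> 1 \<noteq> \<sigma> 2" using inj by (simp_all add: inj_eq)
  have a0: "\<sigma> 0 = 0 \<or> \<sigma> 0 = 1 \<or> \<sigma> 0 = 2" using inr[of 0] by simp
  have a1: "\<sigma> 1 = 0 \<or> \<sigma> 1 = 1 \<or> \<sigma> 1 = 2" using inr[of 1] by simp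
  have a2: "\<sigma> 2 = 0 \<or> \<sigma> 2 = 1 \<or> \<sigma> 2 = 2" using inr[of 2] by simp
  have E: "\<sigma> = \<tau>" if h: "\<tau> 0 = \<sigma> 0" "\<tau> 1 = \<sigma> 1" "\<tau> 2 = \<sigma> 2" "\<And>x. x \<notin> {0,1,2} \<Longrightarrow> \<tau> x = x" for \<tau>
  proof (rule ext)
    fix x
    show "\<sigma> x = \<tau> x" using h out by (cases "x \<in> {0,1,2}") auto
  qed
  have c: "(\<sigma> 0 = 0 \<and> \<sigma> 1 = 1 \<and> \<sigma> 2 = 2) \<or> (\<sigma> 0 = 1 \<and> \<sigma> 1 = 0 \<and> \<sigma> 2 = 2) \<or>
      (\<sigma> 0 = 2 \<and> \<sigma> 1 = 1 \<and> \<sigma> 2 = 0) \<or> (\<sigma> 0 = 0 \<and> \<sigma> 1 = 2 \<and> \<sigma> 2 = 1) \<or>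
      (\<sigma> 0 = 1 \<and> \<sigma> 1 = 2 \<and> \<sigma> 2 = 0) \<or> (\<sigma> 0 = 2 \<and> \<sigma> 1 = 0 \<and> \<sigma> 2 = 1)"
    using a0 a1 a2 d by (elim disjE) simp_all
  then show ?thesis
  proof (elim disjE conjE)
    assume "\<sigma> 0 = 0" "\<sigma> 1 = 1" "\<sigma> 2 = 2"
    then have "\<sigma> = id" by (intro E) auto
    then show ?thesis by simp
  next
    assume "\<sigma> 0 = 1" "\<sigma> 1 = 0" "\<sigma> 2 = 2"
    then have "\<sigma> = transpose 0 1" by (intro E) (auto simp: transpose_def)
    then show ?thesis by simp
  next
    assume "\<sigma> 0 = 2" "\<sigma> 1 = 1" "\<sigma> 2 = 0"
    then have "\<sigma> = transpose 0 2" by (intro E) (auto simp: transpose_def)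
    then show ?thesis by simp
  next
    assume "\<sigma> 0 = 0" "\<sigma> 1 = 2" "\<sigma> 2 = 1"
    then have "\<sigma> = transpose 1 2" by (intro E) (auto simp: transpose_def)
    then show ?thesis by simp
  next
    assume "\<sigma> 0 = 1" "\<sigma> 1 = 2" "\<sigma> 2 = 0"
    then have "\<sigma> = transpose 0 1 \<circ> transpose 1 2" by (intro E) (auto simp: transpose_def)
    then show ?thesis by simp
  next
    assume "\<sigma> 0 = 2" "\<sigma> 1 = 0" "\<sigma> 2 = 1"
    then have "\<sigma> = transpose 1 2 \<circ> transpose 0 1" by (intro E) (auto simp: transpose_def)
    then show ?thesis by simp
  qed
qed

lemma sum_apply_fun: "(\<Sum>x\<in>A. f x) e = (\<Sum>x\<in>A. f x e)"
  by (induction A rule: infinite_finite_induct) auto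

lemma sign_nz: "(of_int (sign \<sigma>) :: 'k::field_char_0) \<noteq> 0"
  by (cases rule: sign_cases[of \<sigma>]) auto

lemma expo_of_simps: "expo_of (a,b,c) 0 = a" "expo_of (a,b,c) (Suc 0) = b" "expo_of (a,b,c) 2 = c"
  "i \<ge> 3 \<Longrightarrow> expo_of (a,b,c) i = 0"
  by (auto simp: expo_of_def)

lemma Pplus_mem: "(a,b,c) \<in> Pplus l n \<longleftrightarrow> l \<ge> a \<and> a > b \<and> b > c \<and> int (a + b + c) = n"
  by (simp add: Pplus_def)

lemma finite_Pplus: "finite (Pplus l n)"
proof -
  have "Pplus l n \<subseteq> {..l} \<times> {..l} \<times> {..l}" by (auto simp: Pplus_def)
  then show ?thesis by (rule finite_subset) auto
qed

lemma finite_perms3: "finite {\<sigma>. \<sigma> permutes {0,1,2::nat}}"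
  by (rule finite_permutations) simp

lemma expo_of_perm_eq:
  assumes "\<mu> \<in> Pplus l n" "\<nu> \<in> Pplus l' n'" "\<sigma> permutes {0,1,2::nat}"
  shows "expo_of \<nu> \<circ> \<sigma> = expo_of \<mu> \<longleftrightarrow> \<sigma> = id \<and> \<nu> = \<mu>"
proof
  obtain a b c where m: "\<mu> = (a,b,c)" by (cases \<mu>) auto
  obtain a' b' c' where n: "\<nu> = (a',b',c')" by (cases \<nu>) auto
  have o: "a > b" "b > c" "a' > b'" "b' > c'" using assms(1,2) by (auto simp: m n Pplus_def)
  assume h: "expo_of \<nu> \<circ> \<sigma> = expo_of \<mu>"
  have h0: "expo_of \<nu> (\<sigma> 0) = a" using fun_cong[OF h, of 0] by (simp add: m expo_of_simps)
  have h1: "expo_of \<nu> (\<sigma> 1) = b" using fun_cong[OF h, of 1] by (simp add: m expo_of_simps)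
  have h2: "expo_of \<nu> (\<sigma> 2) = c" using fun_cong[OF h, of 2] by (simp add: m expo_of_simps)
  from perm3_cases[OF assms(3)] have "\<sigma> = id"
    using h0 h1 h2 o by (elim disjE) (simp_all add: n expo_of_simps transpose_def)
  moreover then have "\<nu> = \<mu>" using h0 h1 h2 by (simp add: m n expo_of_simps)
  ultimately show "\<sigma> = id \<and> \<nu> = \<mu>" by simp
qed auto

lemma alt_apply: "alt \<mu> e = (\<Sum>\<sigma>\<in>{\<sigma>. \<sigma> permutes {0,1,2::nat}}. of_int (sign \<sigma>) * monom3 \<mu> (e \<circ> \<sigma>))"
  by (simp add: alt_def sum_apply_fun act_def)

lemma alt_eval:
  assumes "\<mu> \<in> Pplus l n" "\<nu> \<in> Pplus l' n'"
  shows "(alt \<mu> (expo_of \<nu>) :: 'k::field) = (if \<mu> = \<nu> then 1 else 0)"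
proof -
  have "alt \<mu> (expo_of \<nu>) = (\<Sum>\<sigma>\<in>{\<sigma>. \<sigma> permutes {0,1,2::nat}}. if \<sigma> = id then (if \<mu> = \<nu> then 1 else 0) else (0::'k))"
    unfolding alt_apply
    by (rule sum.cong) (auto simp: monom3_def expo_of_perm_eq[OF assms])
  also have "\<dots> = (if \<mu> = \<nu> then 1 else 0)"
    by (subst sum.delta[OF finite_perms3]) (simp add: permutes_id)
  finally show ?thesis .
qed

lemma perm3_permutation: "\<sigma> permutes {0,1,2::nat} \<Longrightarrow> permutation \<sigma>"
  unfolding permutation_permutes by (rule exI[of _ "{0,1,2}"]) simp

lemma sign_iso_alt: "sign_isotypic (alt \<mu> :: expo \<Rightarrow> 'k::field)"
  unfolding sign_isotypic_def
proof (intro allI impI ext)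
  fix \<sigma> :: "nat \<Rightarrow> nat" and e :: expo
  assume s: "\<sigma> permutes {0,1,2}"
  let ?P = "{\<sigma>. \<sigma> permutes {0,1,2::nat}}"
  have "act \<sigma> (alt \<mu>) e = (\<Sum>\<tau>\<in>?P. of_int (sign \<tau>) * (monom3 \<mu> (e \<circ> \<sigma> \<circ> \<tau>) :: 'k))"
    by (simp add: act_def alt_apply o_assoc)
  also have "\<dots> = (\<Sum>\<tau>\<in>?P. of_int (sign \<sigma>) * (of_int (sign \<tau>) * monom3 \<mu> (e \<circ> \<tau>)))"
  proof (rule sum.reindex_bij_witness[where j = "\<lambda>\<tau>. \<sigma> \<circ> \<tau>" and i = "\<lambda>\<tau>. inv \<sigma> \<circ> \<tau>"])
    fix \<tau> assume t: "\<tau> \<in> ?P"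
    show "inv \<sigma> \<circ> (\<sigma> \<circ> \<tau>) = \<tau>" using permutes_inv_o(2)[OF s] by (simp add: o_assoc)
    show "\<sigma> \<circ> \<tau> \<in> ?P" using t s by (simp add: permutes_compose)
    show "\<sigma> \<circ> (inv \<sigma> \<circ> \<tau>) = \<tau>" using permutes_inv_o(1)[OF s] by (simp add: o_assoc)
    show "inv \<sigma> \<circ> \<tau> \<in> ?P" using t s by (simp add: permutes_compose permutes_inv)
    have "sign (\<sigma> \<circ> \<tau>) = sign \<sigma> * sign \<tau>"
      using t s by (simp add: sign_compose perm3_permutation)
    then have "sign \<sigma> * sign (\<sigma> \<circ> \<tau>) = sign \<tau>"
      by (simp add: mult.assoc[symmetric])
    then have "of_int (sign \<sigma>) * (of_int (sign (\<sigma> \<circ> \<tau>)) :: 'k) = of_int (sign \<tau>)"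
      by (metis of_int_mult)
    then show "of_int (sign \<sigma>) * (of_int (sign (\<sigma> \<circ> \<tau>)) * monom3 \<mu> (e \<circ> (\<sigma> \<circ> \<tau>))) =
         of_int (sign \<tau>) * (monom3 \<mu> (e \<circ> \<sigma> \<circ> \<tau>) :: 'k)"
      by (simp add: o_assoc mult.assoc[symmetric])
  qed
  also have "\<dots> = of_int (sign \<sigma>) * alt \<mu> e"
    by (simp add: alt_apply sum_distrib_left)
  finally show "act \<sigma> (alt \<mu>) e = of_int (sign \<sigma>) * (alt \<mu> e :: 'k)" .
qed

lemma alt_in_Adeg:
  assumes "\<mu> \<in> Pplus (d - 1) (int j)"
  shows "(alt \<mu> :: expo \<Rightarrow> 'k::field) \<in> Adeg d j"
  unfolding Adeg_def
proof (intro CollectI allI impI)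
  fix e assume ne: "e \<notin> mons d j"
  show "alt \<mu> e = (0::'k)"
  proof (rule ccontr)
    assume nz: "alt \<mu> e \<noteq> (0::'k)"
    have "\<exists>\<tau>. \<tau> permutes {0,1,2} \<and> e \<circ> \<tau> = expo_of \<mu>"
    proof (rule ccontr)
      assume "\<not> ?thesis"
      then have "\<And>\<tau>. \<tau> \<in> {\<sigma>. \<sigma> permutes {0,1,2::nat}} \<Longrightarrow> of_int (sign \<tau>) * monom3 \<mu> (e \<circ> \<tau>) = (0::'k)"
        by (simp add: monom3_def)
      then have "alt \<mu> e = (0::'k)" unfolding alt_apply by (rule sum.neutral[rule_format])
      then show False using nz by simp
    qed
    then obtain \<tau> where t: "\<tau> permutes {0,1,2}" and h: "e \<circ> \<tau> = expo_of \<mu>" by blast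
    obtain a b c where m: "\<mu> = (a,b,c)" by (cases \<mu>)
    have o: "a \<le> d - 1" "a > b" "b > c" "a + b + c = j" using assms by (auto simp: m Pplus_def)
    have out: "\<And>i. i \<ge> 3 \<Longrightarrow> e i = 0"
    proof -
      fix i :: nat assume i: "i \<ge> 3"
      then have "\<tau> i = i" using t by (auto simp: permutes_def)
      then show "e i = 0" using fun_cong[OF h, of i] i by (simp add: m expo_of_simps)
    qed
    have h0: "e (\<tau> 0) = a" using fun_cong[OF h, of 0] by (simp add: m expo_of_simps)
    have h1: "e (\<tau> 1) = b" using fun_cong[OF h, of 1] by (simp add: m expo_of_simps)
    have h2: "e (\<tau> 2) = c" using fun_cong[OF h, of 2] by (simp add: m expo_of_simps)
    have all: "e 0 < d \<and> e 1 < d \<and> e 2 < d \<and> e 0 + e 1 + e 2 = j"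
    proof -
      have lt: "a < d" "b < d" "c < d" using o by arith+
      show ?thesis using perm3_cases[OF t] h0 h1 h2 o lt
        by (elim disjE) (simp_all add: transpose_def)
    qed
    have "\<forall>i<3. e i < d"
    proof (intro allI impI)
      fix i :: nat assume "i < 3" then have "i = 0 \<or> i = 1 \<or> i = 2" by auto
      then show "e i < d" using all by auto
    qed
    then have "e \<in> mons d j" using out all by (simp add: mons_def)
    then show False using ne by simp
  qed
qed

lemma sign_iso_apply: "sign_isotypic Q \<Longrightarrow> \<sigma> permutes {0,1,2::nat} \<Longrightarrow> Q (e \<circ> \<sigma>) = of_int (sign \<sigma>) * Q e"
  unfolding sign_isotypic_def act_def by (metis fun_cong)

lemma mons_out: "e \<in> mons d j \<Longrightarrow> i \<ge> 3 \<Longrightarrow> e i = 0"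
  by (simp add: mons_def)

lemma mons_lt: "e \<in> mons d j \<Longrightarrow> e 0 < d \<and> e 1 < d \<and> e 2 < d \<and> e 0 + e 1 + e 2 = j"
  by (simp add: mons_def)

lemma zero_key:
  fixes Q :: "expo \<Rightarrow> 'k::field_char_0"
  assumes Q: "sign_isotypic Q" "\<forall>\<mu>\<in>Pplus (d-1) (int j). Q (expo_of \<mu>) = 0"
    and s: "\<sigma> permutes {0,1,2::nat}" and e: "e \<in> mons d j"
    and o: "e (\<sigma> 0) > e (\<sigma> 1)" "e (\<sigma> 1) > e (\<sigma> 2)"
  shows "Q e = 0"
proof -
  define \<mu> where "\<mu> = (e (\<sigma> 0), e (\<sigma> 1), e (\<sigma> 2))"
  have l: "e 0 < d \<and> e 1 < d \<and> e 2 < d \<and> e 0 + e 1 + e 2 = j" using mons_lt[OF e] .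
  have b: "e (\<sigma> 0) < d \<and> e (\<sigma> 0) + e (\<sigma> 1) + e (\<sigma> 2) = j"
    using perm3_cases[OF s] l by (elim disjE) (simp_all add: transpose_def)
  have "\<mu> \<in> Pplus (d-1) (int j)" using b o by (auto simp: \<mu>_def Pplus_def)
  moreover have "e \<circ> \<sigma> = expo_of \<mu>"
  proof (rule ext)
    fix i :: nat
    show "(e \<circ> \<sigma>) i = expo_of \<mu> i"
    proof (cases "i \<ge> 3")
      case True
      then have "\<sigma> i = i" using s by (auto simp: permutes_def)
      then show ?thesis using True mons_out[OF e True] by (simp add: \<mu>_def expo_of_simps)
    next
      case False then have "i = 0 \<or> i = 1 \<or> i = 2" by auto
      then show ?thesis by (auto simp: \<mu>_def expo_of_simps)
    qed
  qed
  ultimately have "Q (e \<circ> \<sigma>) = 0" using Q(2) by simp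
  then show ?thesis using sign_iso_apply[OF Q(1) s] sign_nz[of \<sigma>] by simp
qed

lemma zero_eq:
  fixes Q :: "expo \<Rightarrow> 'k::field_char_0"
  assumes Q: "sign_isotypic Q" and e: "e \<in> mons d j"
    and s: "\<sigma> permutes {0,1,2::nat}" and "sign \<sigma> = -1" and "e \<circ> \<sigma> = e"
  shows "Q e = 0"
  using sign_iso_apply[OF Q s, of e] assms by simp

lemma sign_zero:
  fixes Q :: "expo \<Rightarrow> 'k::field_char_0"
  assumes A: "Q \<in> Adeg d j" and Q: "sign_isotypic Q" and Z: "\<forall>\<mu>\<in>Pplus (d-1) (int j). Q (expo_of \<mu>) = 0"
  shows "Q = 0"
proof (rule ext)
  fix e
  show "Q e = 0 e"
  proof (cases "e \<in> mons d j")
    case False then show ?thesis using A by (simp add: Adeg_def)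
  next
    case e: True
    have p01: "transpose 0 1 permutes {0,1,2::nat}" by (rule permutes_swap_id) auto
    have p02: "transpose 0 2 permutes {0,1,2::nat}" by (rule permutes_swap_id) auto
    have p12: "transpose 1 2 permutes {0,1,2::nat}" by (rule permutes_swap_id) auto
    have pc1: "transpose 0 1 \<circ> transpose 1 2 permutes {0,1,2::nat}" by (rule permutes_compose[OF p12 p01])
    have pc2: "transpose 1 2 \<circ> transpose 0 1 permutes {0,1,2::nat}" by (rule permutes_compose[OF p01 p12])
    have fix3: "\<And>\<sigma>. \<sigma> permutes {0,1,2::nat} \<Longrightarrow> e (\<sigma> 0) = e 0 \<Longrightarrow> e (\<sigma> 1) = e 1 \<Longrightarrow> e (\<sigma> 2) = e 2 \<Longrightarrow> e \<circ> \<sigma> = e"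
    proof (rule ext)
      fix \<sigma> :: "nat \<Rightarrow> nat" and i :: nat
      assume h: "\<sigma> permutes {0,1,2}" "e (\<sigma> 0) = e 0" "e (\<sigma> 1) = e 1" "e (\<sigma> 2) = e 2"
      show "(e \<circ> \<sigma>) i = e i"
      proof (cases "i \<ge> 3")
        case True then have "\<sigma> i = i" using h by (auto simp: permutes_def)
        then show ?thesis by simp
      next
        case False then have "i = 0 \<or> i = 1 \<or> i = 2" by auto
        then show ?thesis using h by auto
      qed
    qed
    consider "e 0 = e 1" | "e 0 = e 2" | "e 1 = e 2"
      | "e 0 > e 1" "e 1 > e 2" | "e 1 > e 0" "e 0 > e 2" | "e 2 > e 1" "e 1 > e 0"
      | "e 0 > e 2" "e 2 > e 1" | "e 1 > e 2" "e 2 > e 0" | "e 2 > e 0" "e 0 > e 1"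
      by linarith
    then show ?thesis
    proof cases
      case 1 then show ?thesis using zero_eq[OF Q e p01] fix3[OF p01] by (simp add: sign_swap_id transpose_def)
    next
      case 2 then show ?thesis using zero_eq[OF Q e p02] fix3[OF p02] by (simp add: sign_swap_id transpose_def)
    next
      case 3 then show ?thesis using zero_eq[OF Q e p12] fix3[OF p12] by (simp add: sign_swap_id transpose_def)
    next
      case 4 then show ?thesis using zero_key[OF Q Z permutes_id e] by simp
    next
      case 5 then show ?thesis using zero_key[OF Q Z p01 e] by (simp add: transpose_def)
    next
      case 6 then show ?thesis using zero_key[OF Q Z p02 e] by (simp add: transpose_def)
    next
      case 7 then show ?thesis using zero_key[OF Q Z p12 e] by (simp add: transpose_def)
    next
      case 8 then show ?thesis using zero_key[OF Q Z pc1 e] by (simp add: transpose_def)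
    next
      case 9 then show ?thesis using zero_key[OF Q Z pc2 e] by (simp add: transpose_def)
    qed
  qed
qed

definition Ssgn :: "nat \<Rightarrow> nat \<Rightarrow> (expo \<Rightarrow> 'k::field) set" where
  "Ssgn d j = {P \<in> Adeg d j. sign_isotypic P}"

lemma Adeg_sum: "(\<And>x. x \<in> A \<Longrightarrow> f x \<in> Adeg d j) \<Longrightarrow> (\<Sum>x\<in>A. f x) \<in> Adeg d j"
  unfolding Adeg_def by (auto simp: sum_apply_fun intro!: sum.neutral)

lemma sign_iso_sum: "(\<And>x. x \<in> A \<Longrightarrow> sign_isotypic (f x)) \<Longrightarrow> sign_isotypic (\<Sum>x\<in>A. f x)"
  unfolding sign_isotypic_def act_def
  by (auto simp: sum_apply_fun sum_distrib_left fun_eq_iff intro!: sum.cong)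

lemma Adeg_scale: "P \<in> Adeg d j \<Longrightarrow> (\<lambda>e. c * P e) \<in> Adeg d j"
  unfolding Adeg_def by auto

lemma sign_iso_scale: "sign_isotypic P \<Longrightarrow> sign_isotypic (\<lambda>e. c * P e)"
  unfolding sign_isotypic_def act_def by (auto simp: fun_eq_iff algebra_simps)

lemma Adeg_diff: "P \<in> Adeg d j \<Longrightarrow> Q \<in> Adeg d j \<Longrightarrow> P - Q \<in> Adeg d j"
  unfolding Adeg_def by auto

lemma sign_iso_diff: "sign_isotypic P \<Longrightarrow> sign_isotypic Q \<Longrightarrow> sign_isotypic (P - Q)"
  unfolding sign_isotypic_def act_def by (auto simp: fun_eq_iff algebra_simps)

lemma combo_in_Ssgn:
  "(\<Sum>\<mu>\<in>Pplus (d - 1) (int j). (\<lambda>e. \<beta> \<mu> * alt \<mu> e)) \<in> Ssgn d j"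
  unfolding Ssgn_def
  by (auto intro!: Adeg_sum sign_iso_sum Adeg_scale sign_iso_scale alt_in_Adeg sign_iso_alt)

lemma combo_eval:
  assumes "\<nu> \<in> Pplus (d - 1) (int j)"
  shows "(\<Sum>\<mu>\<in>Pplus (d - 1) (int j). (\<lambda>e. \<beta> \<mu> * (alt \<mu> e :: 'k::field))) (expo_of \<nu>) = \<beta> \<nu>"
proof -
  have "(\<Sum>\<mu>\<in>Pplus (d - 1) (int j). (\<lambda>e. \<beta> \<mu> * (alt \<mu> e :: 'k::field))) (expo_of \<nu>)
     = (\<Sum>\<mu>\<in>Pplus (d - 1) (int j). if \<mu> = \<nu> then \<beta> \<mu> else 0)"
    unfolding sum_apply_fun by (rule sum.cong) (auto simp: alt_eval[OF _ assms])
  also have "\<dots> = \<beta> \<nu>" using assms by (simp add: finite_Pplus)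
  finally show ?thesis .
qed

lemma Ssgn_char:
  "(P :: expo \<Rightarrow> 'k::field_char_0) \<in> Ssgn d j \<longleftrightarrow>
    (\<exists>\<beta>. P = (\<Sum>\<mu>\<in>Pplus (d - 1) (int j). (\<lambda>e. \<beta> \<mu> * alt \<mu> e)))"
proof
  assume P: "P \<in> Ssgn d j"
  define R where "R = (\<Sum>\<mu>\<in>Pplus (d - 1) (int j). (\<lambda>e. P (expo_of \<mu>) * (alt \<mu> e :: 'k)))"
  have R: "R \<in> Ssgn d j" unfolding R_def by (rule combo_in_Ssgn)
  have "P - R = 0"
  proof (rule sign_zero)
    show "P - R \<in> Adeg d j" using P R by (auto simp: Ssgn_def intro: Adeg_diff)
    show "sign_isotypic (P - R)" using P R by (auto simp: Ssgn_def intro: sign_iso_diff)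
    show "\<forall>\<mu>\<in>Pplus (d - 1) (int j). (P - R) (expo_of \<mu>) = 0"
    proof
      fix \<mu> assume "\<mu> \<in> Pplus (d - 1) (int j)"
      from combo_eval[OF this, of "\<lambda>\<mu>. P (expo_of \<mu>)"]
      show "(P - R) (expo_of \<mu>) = 0" by (simp add: R_def)
    qed
  qed
  then show "\<exists>\<beta>. P = (\<Sum>\<mu>\<in>Pplus (d - 1) (int j). (\<lambda>e. \<beta> \<mu> * alt \<mu> e))"
    by (intro exI[of _ "\<lambda>\<mu>. P (expo_of \<mu>)"]) (simp add: R_def)
next
  assume "\<exists>\<beta>. P = (\<Sum>\<mu>\<in>Pplus (d - 1) (int j). (\<lambda>e. \<beta> \<mu> * alt \<mu> e))"
  then show "P \<in> Ssgn d j" using combo_in_Ssgn by auto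
qed

interpretation V: vector_space "\<lambda>(c::'k::field) (f::expo \<Rightarrow> 'k). (\<lambda>x. c * f x)"
  by unfold_locales (auto simp: algebra_simps fun_eq_iff)

lemma alt_inj: "inj_on (alt :: _ \<Rightarrow> expo \<Rightarrow> 'k::field) (Pplus l n)"
proof (rule inj_onI)
  fix \<mu> \<nu> assume m: "\<mu> \<in> Pplus l n" and n: "\<nu> \<in> Pplus l n" and eq: "(alt \<mu> :: expo \<Rightarrow> 'k) = alt \<nu>"
  have "(alt \<mu> (expo_of \<nu>) :: 'k) = alt \<nu> (expo_of \<nu>)" using eq by simp
  show "\<mu> = \<nu>"
  proof (rule ccontr)
    assume "\<mu> \<noteq> \<nu>"
    then have "(0::'k) = 1" using \<open>(alt \<mu> (expo_of \<nu>) :: 'k) = alt \<nu> (expo_of \<nu>)\<close> alt_eval[OF m n, where 'k='k] alt_eval[OF n n, where 'k='k] by simp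
    then show False by simp
  qed
qed

lemma span_alts: "V.span ((alt :: _ \<Rightarrow> expo \<Rightarrow> 'k::field_char_0) ` Pplus (d-1) (int j)) = Ssgn d j"
proof -
  let ?A = "(alt :: _ \<Rightarrow> expo \<Rightarrow> 'k) ` Pplus (d-1) (int j)"
  have fin: "finite ?A" by (simp add: finite_Pplus)
  have "V.span ?A = range (\<lambda>u. \<Sum>v\<in>?A. (\<lambda>x. (u v :: 'k) * (v :: expo \<Rightarrow> 'k) x))" using V.span_finite[OF fin] .
  also have "\<dots> = range (\<lambda>\<beta>. \<Sum>\<mu>\<in>Pplus (d - 1) (int j). (\<lambda>e. \<beta> \<mu> * alt \<mu> e))"
  proof (intro set_eqI iffI)
    fix x assume "x \<in> range (\<lambda>u. \<Sum>v\<in>?A. (\<lambda>x. (u v :: 'k) * (v :: expo \<Rightarrow> 'k) x))"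
    then obtain u where "x = (\<Sum>v\<in>?A. (\<lambda>x. (u v :: 'k) * (v :: expo \<Rightarrow> 'k) x))" by auto
    also have "\<dots> = (\<Sum>\<mu>\<in>Pplus (d - 1) (int j). (\<lambda>e. u (alt \<mu>) * alt \<mu> e))"
      by (subst sum.reindex[OF alt_inj]) simp
    finally show "x \<in> range (\<lambda>\<beta>. \<Sum>\<mu>\<in>Pplus (d - 1) (int j). (\<lambda>e. \<beta> \<mu> * alt \<mu> e))" by auto
  next
    fix x assume "x \<in> range (\<lambda>\<beta>. \<Sum>\<mu>\<in>Pplus (d - 1) (int j). (\<lambda>e. \<beta> \<mu> * (alt \<mu> e :: 'k)))"
    then obtain \<beta> where x: "x = (\<Sum>\<mu>\<in>Pplus (d - 1) (int j). (\<lambda>e. \<beta> \<mu> * (alt \<mu> e :: 'k)))" by auto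
    define u where "u = (\<lambda>v. \<beta> (the_inv_into (Pplus (d - 1) (int j)) (alt :: _ \<Rightarrow> expo \<Rightarrow> 'k) v))"
    have "x = (\<Sum>\<mu>\<in>Pplus (d - 1) (int j). (\<lambda>e. u (alt \<mu>) * alt \<mu> e))"
      unfolding x u_def by (rule sum.cong) (auto simp: the_inv_into_f_f[OF alt_inj])
    also have "\<dots> = (\<Sum>v\<in>?A. (\<lambda>x. (u v :: 'k) * (v :: expo \<Rightarrow> 'k) x))"
      by (subst sum.reindex[OF alt_inj]) simp
    finally show "x \<in> range (\<lambda>u. \<Sum>v\<in>?A. (\<lambda>x. (u v :: 'k) * (v :: expo \<Rightarrow> 'k) x))" by auto
  qed
  also have "\<dots> = Ssgn d j" using Ssgn_char by auto
  finally show ?thesis .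
qed

lemma indep_alts: "V.independent ((alt :: _ \<Rightarrow> expo \<Rightarrow> 'k::field) ` Pplus l n)"
proof
  let ?A = "(alt :: _ \<Rightarrow> expo \<Rightarrow> 'k) ` Pplus l n"
  assume "V.dependent ?A"
  then obtain u where u: "\<exists>v\<in>?A. u v \<noteq> 0" "(\<Sum>v\<in>?A. (\<lambda>x. (u v :: 'k) * (v :: expo \<Rightarrow> 'k) x)) = 0"
    using V.dependent_finite[of ?A] finite_Pplus by auto
  from u(1) obtain \<nu> where n: "\<nu> \<in> Pplus l n" "u (alt \<nu>) \<noteq> 0" by auto
  have "0 = (\<Sum>v\<in>?A. (\<lambda>x. (u v :: 'k) * (v :: expo \<Rightarrow> 'k) x)) (expo_of \<nu>)" using u(2) by simp
  also have "\<dots> = (\<Sum>\<mu>\<in>Pplus l n. u (alt \<mu>) * alt \<mu> (expo_of \<nu>))"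
    by (subst sum.reindex[OF alt_inj]) (simp add: sum_apply_fun)
  also have "\<dots> = (\<Sum>\<mu>\<in>Pplus l n. if \<mu> = \<nu> then u (alt \<mu>) else 0)"
    by (rule sum.cong) (auto simp: alt_eval[OF _ n(1)])
  also have "\<dots> = u (alt \<nu>)" using n by (simp add: finite_Pplus)
  finally show False using n by simp
qed

lemma dim_Ssgn: "V.dim (Ssgn d j :: (expo \<Rightarrow> 'k::field_char_0) set) = pplus (d-1) (int j)"
proof -
  have "V.dim (Ssgn d j :: (expo \<Rightarrow> 'k) set) = V.dim (V.span ((alt :: _ \<Rightarrow> expo \<Rightarrow> 'k) ` Pplus (d-1) (int j)))"
    by (subst span_alts) (rule refl)
  also have "\<dots> = card ((alt :: _ \<Rightarrow> expo \<Rightarrow> 'k) ` Pplus (d-1) (int j))"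
    by (rule V.dim_span_eq_card_independent[OF indep_alts])
  also have "\<dots> = pplus (d-1) (int j)" by (simp add: card_image[OF alt_inj] pplus_def)
  finally show ?thesis .
qed

definition Fop :: "nat \<Rightarrow> (expo \<Rightarrow> 'k::field) \<Rightarrow> (expo \<Rightarrow> 'k)" where
  "Fop d P = (\<lambda>e. \<Sum>k<3. if 0 < e k \<and> e k < d then P (e(k := e k - 1)) else 0)"

lemma sum3: "(\<Sum>k<(3::nat). f k) = f 0 + f 1 + (f 2 :: 'a::comm_monoid_add)"
  by (simp add: numeral_3_eq_3 numeral_2_eq_2 lessThan_Suc add_ac)

lemma mons_up: "k < 3 \<Longrightarrow> e(k := e k + 1) \<in> mons d (Suc m) \<Longrightarrow> e \<in> mons d m"
  unfolding mons_def
proof (intro CollectI conjI allI impI; elim CollectE conjE)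
  assume k: "k < 3" and o: "\<forall>i\<ge>3. (e(k := e k + 1)) i = 0" and l: "\<forall>i<3. (e(k := e k + 1)) i < d"
    and s: "(e(k := e k + 1)) 0 + (e(k := e k + 1)) 1 + (e(k := e k + 1)) 2 = Suc m"
  fix i
  show "3 \<le> i \<Longrightarrow> e i = 0" using o k by (metis fun_upd_apply not_le)
  show "i < 3 \<Longrightarrow> e i < d" using l[rule_format, of i] by (cases "i = k") auto
  have "k = 0 \<or> k = 1 \<or> k = 2" using k by auto
  then show "e 0 + e 1 + e 2 = m" using s by auto
qed

lemma mons_down: "k < 3 \<Longrightarrow> 0 < e k \<Longrightarrow> e k < d \<Longrightarrow> e(k := e k - 1) \<in> mons d m \<Longrightarrow> e \<in> mons d (Suc m)"
  unfolding mons_def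
proof (intro CollectI conjI allI impI; elim CollectE conjE)
  assume k: "k < 3" "0 < e k" "e k < d" and o: "\<forall>i\<ge>3. (e(k := e k - 1)) i = 0" and l: "\<forall>i<3. (e(k := e k - 1)) i < d"
    and s: "(e(k := e k - 1)) 0 + (e(k := e k - 1)) 1 + (e(k := e k - 1)) 2 = m"
  fix i
  show "3 \<le> i \<Longrightarrow> e i = 0" using o k by (metis fun_upd_apply not_le)
  show "i < 3 \<Longrightarrow> e i < d" using l[rule_format, of i] k by (cases "i = k") auto
  have "k = 0 \<or> k = 1 \<or> k = 2" using k by auto
  then show "e 0 + e 1 + e 2 = Suc m" using s k by auto
qed

lemma E_deg: "P \<in> Adeg d (Suc m) \<Longrightarrow> Eop d P \<in> Adeg d m"
  unfolding Adeg_def Eop_def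
proof (intro CollectI allI impI sum.neutral ballI; elim CollectE)
  fix e k assume P: "\<forall>e. e \<notin> mons d (Suc m) \<longrightarrow> P e = 0" and e: "e \<notin> mons d m" and k: "k \<in> {..<3::nat}"
  have "e(k := e k + 1) \<notin> mons d (Suc m)" using mons_up[of k e d m] k e by auto
  then show "of_nat ((e k + 1) * (d - (e k + 1))) * P (e(k := e k + 1)) = 0" using P by simp
qed

lemma E_deg0: "P \<in> Adeg d 0 \<Longrightarrow> Eop d P = 0"
  unfolding Adeg_def Eop_def
proof (intro ext, simp only: zero_fun_def, intro sum.neutral ballI; elim CollectE)
  fix e k assume P: "\<forall>e. e \<notin> mons d 0 \<longrightarrow> P e = 0" and k: "k \<in> {..<3::nat}"
  have "e(k := e k + 1) \<notin> mons d 0"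
  proof
    assume "e(k := e k + 1) \<in> mons d 0"
    then have "(e(k := e k + 1)) 0 + (e(k := e k + 1)) 1 + (e(k := e k + 1)) 2 = 0" by (simp add: mons_def)
    moreover have "k = 0 \<or> k = 1 \<or> k = 2" using k by auto
    ultimately show False by auto
  qed
  then show "of_nat ((e k + 1) * (d - (e k + 1))) * P (e(k := e k + 1)) = 0" using P by simp
qed

lemma F_deg: "P \<in> Adeg d m \<Longrightarrow> Fop d P \<in> Adeg d (Suc m)"
  unfolding Adeg_def Fop_def
proof (intro CollectI allI impI sum.neutral ballI; elim CollectE)
  fix e k assume P: "\<forall>e. e \<notin> mons d m \<longrightarrow> P e = 0" and e: "e \<notin> mons d (Suc m)" and k: "k \<in> {..<3::nat}"
  show "(if 0 < e k \<and> e k < d then P (e(k := e k - 1)) else 0) = 0"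
    using mons_down[of k e d m] k e P by auto
qed

lemma E_scale: "Eop d (\<lambda>e. c * P e) = (\<lambda>e. c * Eop d P e)"
  unfolding Eop_def by (auto simp: sum_distrib_left algebra_simps)
lemma F_scale: "Fop d (\<lambda>e. c * P e) = (\<lambda>e. c * Fop d P e)"
  unfolding Fop_def by (auto simp: sum_distrib_left intro!: sum.cong)
lemma E_add: "Eop d (P + Q) = Eop d P + Eop d Q"
  unfolding Eop_def by (auto simp: sum.distrib algebra_simps)
lemma F_add: "Fop d (P + Q) = Fop d P + Fop d Q"
  unfolding Fop_def by (rule ext) (auto simp: sum.distrib[symmetric] intro!: sum.cong)
lemma E_zero: "Eop d 0 = 0"
  unfolding Eop_def by (auto simp: fun_eq_iff)
lemma F_zero: "Fop d 0 = 0"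
  unfolding Fop_def zero_fun_def by simp

lemma perm3_bij: "\<sigma> permutes {0,1,2::nat} \<Longrightarrow> bij_betw \<sigma> {..<3} {..<3}"
proof -
  assume s: "\<sigma> permutes {0,1,2::nat}"
  have "{..<3::nat} = {0,1,2}" by auto
  then show ?thesis using permutes_imp_bij[OF s] by simp
qed

lemma upd_comp: "inj \<sigma> \<Longrightarrow> e(\<sigma> k := v) \<circ> \<sigma> = (e \<circ> \<sigma>)(k := v)"
  by (auto simp: fun_eq_iff inj_eq)

lemma E_equiv:
  assumes s: "\<sigma> permutes {0,1,2::nat}"
  shows "act \<sigma> (Eop d P) = Eop d (act \<sigma> P)"
proof (rule ext)
  fix e
  have inj: "inj \<sigma>" using s permutes_inj by blast
  have "Eop d (act \<sigma> P) e = (\<Sum>k<3. of_nat ((e k + 1) * (d - (e k + 1))) * P (e(k := e k + 1) \<circ> \<sigma>))"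
    by (simp add: Eop_def act_def)
  also have "\<dots> = (\<Sum>k<3. of_nat ((e (\<sigma> k) + 1) * (d - (e (\<sigma> k) + 1))) * P (e(\<sigma> k := e (\<sigma> k) + 1) \<circ> \<sigma>))"
    by (rule sum.reindex_bij_betw[OF perm3_bij[OF s], symmetric])
  also have "\<dots> = act \<sigma> (Eop d P) e"
    by (simp add: Eop_def act_def upd_comp[OF inj])
  finally show "act \<sigma> (Eop d P) e = Eop d (act \<sigma> P) e" ..
qed

lemma F_equiv:
  assumes s: "\<sigma> permutes {0,1,2::nat}"
  shows "act \<sigma> (Fop d P) = Fop d (act \<sigma> P)"
proof (rule ext)
  fix e
  have inj: "inj \<sigma>" using s permutes_inj by blast
  have "Fop d (act \<sigma> P) e = (\<Sum>k<3. if 0 < e k \<and> e k < d then P (e(k := e k - 1) \<circ> \<sigma>) else 0)"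
    by (simp add: Fop_def act_def)
  also have "\<dots> = (\<Sum>k<3. if 0 < e (\<sigma> k) \<and> e (\<sigma> k) < d then P (e(\<sigma> k := e (\<sigma> k) - 1) \<circ> \<sigma>) else 0)"
    by (rule sum.reindex_bij_betw[OF perm3_bij[OF s], symmetric])
  also have "\<dots> = act \<sigma> (Fop d P) e"
    by (simp add: Fop_def act_def upd_comp[OF inj] cong: if_cong)
  finally show "act \<sigma> (Fop d P) e = Fop d (act \<sigma> P) e" ..
qed

lemma sign_iso_E: "sign_isotypic P \<Longrightarrow> sign_isotypic (Eop d P)"
  unfolding sign_isotypic_def by (auto simp: E_equiv E_scale)

lemma sign_iso_F: "sign_isotypic P \<Longrightarrow> sign_isotypic (Fop d P)"
  unfolding sign_isotypic_def by (auto simp: F_equiv F_scale)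

lemma c_step: "a < d \<Longrightarrow> (of_nat ((a + 1) * (d - (a + 1))) :: 'k::field) - of_nat (a * (d - a)) = of_nat d - 1 - 2 * of_nat a"
proof -
  assume a: "a < d"
  define r where "r = d - (a + 1)"
  have d: "d = a + 1 + r" using a unfolding r_def by simp
  have da: "d - a = r + 1" using d by simp
  have e1: "(of_nat ((a + 1) * (d - (a + 1))) :: 'k) = (of_nat a + 1) * of_nat r" unfolding r_def[symmetric] by (simp add: algebra_simps)
  have e2: "(of_nat (a * (d - a)) :: 'k) = of_nat a * (of_nat r + 1)" by (simp add: da algebra_simps)
  have e3: "(of_nat d :: 'k) = of_nat a + 1 + of_nat r" by (subst d) simp
  show ?thesis unfolding e1 e2 e3 by (simp add: algebra_simps)
qed

lemma comm_pt:
  fixes P :: "expo \<Rightarrow> 'k::field"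
  assumes e: "e \<in> mons d m"
  shows "Eop d (Fop d P) e = Fop d (Eop d P) e + (of_nat (3*(d-1)) - 2 * of_nat m) * P e"
proof -
  define c where "c x = (of_nat (x * (d - x)) :: 'k)" for x
  define T1 where "T1 k l = c (e k + 1) * (if 0 < (e(k:=e k+1)) l \<and> (e(k:=e k+1)) l < d
      then P ((e(k:=e k+1))(l := (e(k:=e k+1)) l - 1)) else 0)" for k l
  define T2 where "T2 k l = (if 0 < e l \<and> e l < d then c ((e(l:=e l-1)) k + 1) * P ((e(l:=e l-1))(k := (e(l:=e l-1)) k + 1)) else 0)" for k l
  have ml: "e 0 < d \<and> e 1 < d \<and> e 2 < d \<and> e 0 + e 1 + e 2 = m" using mons_lt[OF e] .
  have lhs: "Eop d (Fop d P) e = (\<Sum>k<3. \<Sum>l<3. T1 k l)"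
    by (simp add: Eop_def Fop_def T1_def c_def sum_distrib_left)
  have rhs: "Fop d (Eop d P) e = (\<Sum>k<3. \<Sum>l<3. T2 k l)"
    unfolding Eop_def Fop_def T2_def c_def
    by (subst sum.swap) (auto intro!: sum.cong)
  have diag: "T1 k k - T2 k k = (of_nat d - 1 - 2 * of_nat (e k)) * P e" if "e k < d" for k
  proof -
    have u: "(e(k:=e k+1))(k := e k + 1 - 1) = e" by simp
    have "T1 k k = c (e k + 1) * (if 0 < e k + 1 \<and> e k + 1 < d then P ((e(k:=e k+1))(k := e k + 1 - 1)) else 0)"
      unfolding T1_def fun_upd_same ..
    also have "\<dots> = c (e k + 1) * (if e k + 1 < d then P e else 0)" unfolding u by simp
    also have "\<dots> = c (e k + 1) * P e"
    proof (cases "e k + 1 < d")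
      case False then have "d - (e k + 1) = 0" by simp
      then show ?thesis by (simp add: c_def)
    qed simp
    finally have "T1 k k = c (e k + 1) * P e" .
    moreover have "T2 k k = c (e k) * P e"
    proof -
      have "T2 k k = (if 0 < e k \<and> e k < d then c (e k - 1 + 1) * P ((e(k:=e k - 1))(k := e k - 1 + 1)) else 0)"
        unfolding T2_def fun_upd_same ..
      also have "\<dots> = c (e k) * P e"
      proof (cases "e k = 0")
        case True then show ?thesis by (simp add: c_def)
      next
        case False then have "e k - 1 + 1 = e k" by simp
        then show ?thesis using False that by simp
      qed
      finally show ?thesis .
    qed
    ultimately have "T1 k k - T2 k k = (c (e k + 1) - c (e k)) * P e" by (simp add: algebra_simps)
    also have "c (e k + 1) - c (e k) = of_nat d - 1 - 2 * of_nat (e k)"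
      using c_step[OF that, where 'k='k] unfolding c_def .
    finally show ?thesis .
  qed
  have off: "T1 k l = T2 k l" if "k \<noteq> l" for k l
    using that by (auto simp: T1_def T2_def fun_upd_twist)
  have inner: "(\<Sum>l<3. T1 k l) - (\<Sum>l<3. T2 k l) = (if k < 3 then T1 k k - T2 k k else 0)" for k
  proof -
    have "(\<Sum>l<3. T1 k l) - (\<Sum>l<3. T2 k l) = (\<Sum>l<3. T1 k l - T2 k l)"
      by (simp add: sum_subtractf)
    also have "\<dots> = (\<Sum>l<3. if l = k then T1 k k - T2 k k else 0)"
      by (rule sum.cong) (auto simp: off)
    also have "\<dots> = (if k < 3 then T1 k k - T2 k k else 0)" by (simp add: sum.delta)
    finally show ?thesis .
  qed
  have "Eop d (Fop d P) e - Fop d (Eop d P) e = (\<Sum>k<3. T1 k k - T2 k k)"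
  proof -
    have "Eop d (Fop d P) e - Fop d (Eop d P) e = (\<Sum>k<3. (\<Sum>l<3. T1 k l) - (\<Sum>l<3. T2 k l))"
      by (simp add: lhs rhs sum_subtractf)
    also have "\<dots> = (\<Sum>k<3. T1 k k - T2 k k)"
      by (rule sum.cong) (simp_all add: inner)
    finally show ?thesis .
  qed
  also have "\<dots> = (of_nat d - 1 - 2 * of_nat (e 0)) * P e + (of_nat d - 1 - 2 * of_nat (e 1)) * P e
      + (of_nat d - 1 - 2 * of_nat (e 2)) * P e"
    unfolding sum3 using ml by (simp add: diag)
  also have "\<dots> = (of_nat (3*(d-1)) - 2 * of_nat m) * P e"
  proof -
    have "d \<ge> 1" using ml by auto
    then have N: "(of_nat (3*(d-1)) :: 'k) = 3 * of_nat d - 3" by (simp add: of_nat_diff)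
    have M: "(of_nat m :: 'k) = of_nat (e 0) + of_nat (e 1) + of_nat (e 2)" using ml by (metis of_nat_add)
    show ?thesis unfolding N M by (simp add: algebra_simps)
  qed
  finally show ?thesis by (simp add: algebra_simps)
qed

lemma span_disjoint:
  fixes B K C :: "(expo \<Rightarrow> 'k::field) set"
  assumes B: "V.independent B" "finite B" and KC: "K \<subseteq> B" "C \<subseteq> B" "K \<inter> C = {}"
    and x: "x \<in> V.span K" "x \<in> V.span C"
  shows "x = 0"
proof -
  have fK: "finite K" using finite_subset[OF KC(1) B(2)] .
  have fC: "finite C" using finite_subset[OF KC(2) B(2)] .
  obtain u where xu: "x = (\<Sum>v\<in>K. (\<lambda>y. u v * v y))" using x(1) V.span_finite[OF fK] by auto
  obtain w where xw: "x = (\<Sum>v\<in>C. (\<lambda>y. w v * v y))" using x(2) V.span_finite[OF fC] by auto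
  define g where "g v = (if v \<in> K then u v else - w v)" for v
  have "(\<Sum>v\<in>K \<union> C. (\<lambda>y. g v * v y)) = 0"
  proof (rule ext)
    fix y
    have "(\<Sum>v\<in>K \<union> C. (\<lambda>y. g v * v y)) y = (\<Sum>v\<in>K. g v * v y) + (\<Sum>v\<in>C. g v * v y)"
      by (simp add: sum_apply_fun sum.union_disjoint fK fC KC)
    also have "(\<Sum>v\<in>K. g v * v y) = (\<Sum>v\<in>K. u v * v y)" by (simp add: g_def)
    also have "(\<Sum>v\<in>C. g v * v y) = - (\<Sum>v\<in>C. w v * v y)"
      using KC(3) by (auto simp: g_def sum_negf[symmetric] intro!: sum.cong)
    also have "(\<Sum>v\<in>K. u v * v y) = x y" by (simp add: xu sum_apply_fun)
    also have "(\<Sum>v\<in>C. w v * v y) = x y" by (simp add: xw sum_apply_fun)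
    finally show "(\<Sum>v\<in>K \<union> C. (\<lambda>y. g v * v y)) y = 0 y" by simp
  qed
  then have "\<And>v. v \<in> K \<union> C \<Longrightarrow> g v = 0"
    using V.independentD[OF B(1), of "K \<union> C" g] fK fC KC by auto
  then have gz: "\<And>v. v \<in> K \<union> C \<Longrightarrow> g v = 0" .
  have uz: "u v = 0" if "v \<in> K" for v using gz[of v] that by (simp add: g_def)
  show "x = 0"
  proof (rule ext)
    fix y show "x y = 0 y" using uz by (simp add: xu sum_apply_fun)
  qed
qed

lemma rank_nullity:
  fixes f :: "(expo \<Rightarrow> 'k::field) \<Rightarrow> (expo \<Rightarrow> 'k)"
  assumes lf: "Vector_Spaces.linear (\<lambda>(c::'k) (f::expo \<Rightarrow> 'k). (\<lambda>x. c * f x)) (\<lambda>(c::'k) (f::expo \<Rightarrow> 'k). (\<lambda>x. c * f x)) f"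
    and S: "V.subspace S" and W: "finite W" "S \<subseteq> V.span W"
  shows "V.dim S = V.dim {x \<in> S. f x = 0} + V.dim (f ` S)"
proof -
  interpret lin: Vector_Spaces.linear "\<lambda>(c::'k) (f::expo \<Rightarrow> 'k). (\<lambda>x. c * f x)" "\<lambda>(c::'k) (f::expo \<Rightarrow> 'k). (\<lambda>x. c * f x)" f
    by (rule lf)
  obtain K where K: "K \<subseteq> {x\<in>S. f x = 0}" "V.independent K" "{x\<in>S. f x = 0} \<subseteq> V.span K"
      "card K = V.dim {x\<in>S. f x = 0}"
    using V.basis_exists by blast
  have KS: "K \<subseteq> S" using K(1) by auto
  obtain B where B: "K \<subseteq> B" "B \<subseteq> S" "V.independent B" "S \<subseteq> V.span B"
    using V.maximal_independent_subset_extend[OF KS K(2)] by blast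
  have finB: "finite B" using V.independent_span_bound[OF W(1) B(3)] B(2) W(2) by auto
  have dimS: "card B = V.dim S" using V.basis_card_eq_dim[OF B(2) B(4) B(3)] .
  define C where "C = B - K"
  have finC: "finite C" and finK: "finite K" using finB B(1) by (auto simp: C_def intro: finite_subset)
  have cardB: "card B = card K + card C"
    using card_Un_disjoint[OF finK finC] B(1) by (auto simp: C_def Un_absorb1 Un_Diff_cancel)
  have CS: "C \<subseteq> S" using B(2) by (auto simp: C_def)
  have spanCS: "V.span C \<subseteq> S" using V.span_minimal[OF CS S] .
  have inj: "inj_on f (V.span C)"
    unfolding lin.inj_on_iff_eq_0[OF V.subspace_span]
  proof (intro ballI impI)
    fix x assume xC: "x \<in> V.span C" and fx: "f x = 0"
    have xK: "x \<in> V.span K" using xC fx spanCS K(3) by auto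
    have "C \<subseteq> B" "K \<inter> C = {}" by (auto simp: C_def)
    then show "x = 0" using span_disjoint[OF B(3) finB B(1) _ _ xK xC] by blast
  qed
  have "C \<subseteq> B" by (auto simp: C_def)
  then have indC: "V.independent C" using V.independent_mono[OF B(3)] by blast
  have indfC: "V.independent (f ` C)" using lin.independent_injective_image[OF indC inj] .
  have cardfC: "card (f ` C) = card C"
    using card_image inj_on_subset[OF inj V.span_superset] by blast
  have "V.dim (f ` S) = card (f ` C)"
  proof (rule V.dim_unique[OF _ _ indfC refl])
    show "f ` C \<subseteq> f ` S" using B(2) by (auto simp: C_def)
    show "f ` S \<subseteq> V.span (f ` C)"
    proof
      fix y assume "y \<in> f ` S"
      then obtain x where x: "x \<in> S" "y = f x" by auto
      have "f ` B \<subseteq> V.span (f ` C)"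
      proof
        fix z assume "z \<in> f ` B"
        then obtain b where b: "b \<in> B" "z = f b" by auto
        show "z \<in> V.span (f ` C)"
        proof (cases "b \<in> K")
          case True then have "f b = 0" using K(1) by auto
          then show ?thesis using b V.span_zero by simp
        next
          case False then have "b \<in> C" using b by (simp add: C_def)
          then have "f b \<in> f ` C" by blast
          then show ?thesis using b(2) V.span_base by simp
        qed
      qed
      then have "V.span (f ` B) \<subseteq> V.span (f ` C)" using V.span_minimal V.subspace_span by blast
      moreover have "y \<in> V.span (f ` B)" using x B(4) lin.span_image by auto
      ultimately show "y \<in> V.span (f ` C)" by auto
    qed
  qed
  then show ?thesis using dimS cardB K(4) cardfC by simp
qed

lemma comm:
  fixes P :: "expo \<Rightarrow> 'k::field"
  assumes P: "P \<in> Adeg d m"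
  shows "Eop d (Fop d P) = (\<lambda>e. Fop d (Eop d P) e + (of_nat (3*(d-1)) - 2 * of_nat m) * P e)"
proof (rule ext)
  fix e
  show "Eop d (Fop d P) e = Fop d (Eop d P) e + (of_nat (3*(d-1)) - 2 * of_nat m) * P e"
  proof (cases "e \<in> mons d m")
    case True then show ?thesis by (rule comm_pt)
  next
    case False
    have "Eop d (Fop d P) \<in> Adeg d m" using E_deg[OF F_deg[OF P]] .
    then have 1: "Eop d (Fop d P) e = 0" using False by (simp add: Adeg_def)
    have 2: "Fop d (Eop d P) e = 0"
    proof (cases m)
      case 0 then have "Fop d (Eop d P) = 0" using E_deg0[of P d] P by (simp add: F_zero)
      then show ?thesis by simp
    next
      case (Suc m')
      then have "Fop d (Eop d P) \<in> Adeg d m" using F_deg[OF E_deg] P by simp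
      then show ?thesis using False by (simp add: Adeg_def)
    qed
    have 3: "P e = 0" using P False by (simp add: Adeg_def)
    show ?thesis using 1 2 3 by simp
  qed
qed

lemma EF_step:
  fixes P :: "expo \<Rightarrow> 'k::field_char_0"
  assumes P: "P \<in> Adeg d m" and m: "2*m < 3*(d-1)" and c: "c \<le> 0"
    and EF: "Eop d (Fop d P) = (\<lambda>e. of_int c * P e)"
  shows "Fop d (Eop d P) = (\<lambda>e. of_int (c - (int (3*(d-1)) - 2 * int m)) * P e)"
proof (rule ext)
  fix e
  have L: "(of_nat (3*(d-1)) - 2 * of_nat m :: 'k) = of_int (int (3*(d-1)) - 2 * int m)" by simp
  have "of_int c * P e = Fop d (Eop d P) e + (of_nat (3*(d-1)) - 2 * of_nat m) * P e"
    using fun_cong[OF EF, of e] comm[OF P] by (metis)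
  then show "Fop d (Eop d P) e = of_int (c - (int (3*(d-1)) - 2 * int m)) * P e"
    unfolding L by (simp add: algebra_simps)
qed

lemma EF_inj:
  fixes P :: "expo \<Rightarrow> 'k::field_char_0"
  shows "2*m < 3*(d-1) \<Longrightarrow> P \<in> Adeg d m \<Longrightarrow> c \<le> 0 \<Longrightarrow> Eop d (Fop d P) = (\<lambda>e. of_int c * P e) \<Longrightarrow> P = 0"
proof (induction m arbitrary: P c)
  case 0
  have FE: "Fop d (Eop d P) = (\<lambda>e. of_int (c - (int (3*(d-1)) - 2 * int 0)) * P e)"
    by (rule EF_step[OF 0(2) 0(1) 0(3) 0(4)])
  have "Eop d P = 0" by (rule E_deg0[OF 0(2)])
  then have z: "\<And>e. of_int (c - (int (3*(d-1)) - 2 * int 0)) * P e = (0::'k)" using FE F_zero by (metis fun_cong zero_fun_def)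
  have "c - (int (3*(d-1)) - 2 * int 0) \<noteq> 0" using 0(1,3) by simp
  then have "(of_int (c - (int (3*(d-1)) - 2 * int 0)) :: 'k) \<noteq> 0" by (simp only: of_int_eq_0_iff not_False_eq_True)
  then show ?case using z by (auto simp: fun_eq_iff)
next
  case (Suc m)
  define c' where "c' = c - (int (3*(d-1)) - 2 * int (Suc m))"
  have FE: "Fop d (Eop d P) = (\<lambda>e. of_int c' * P e)"
    unfolding c'_def by (rule EF_step[OF Suc(3) Suc(2) Suc(4) Suc(5)])
  have c': "c' < 0" using Suc(2,4) by (simp add: c'_def)
  have "Eop d (Fop d (Eop d P)) = (\<lambda>e. of_int c' * Eop d P e)"
    unfolding FE E_scale ..
  moreover have "2 * m < 3 * (d - 1)" using Suc(2) by simp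
  moreover have "c' \<le> 0" using c' by simp
  ultimately have "Eop d P = 0"
    using Suc(1)[of "Eop d P" c'] E_deg[OF Suc(3)] by blast
  then have z: "\<And>e. of_int c' * P e = (0::'k)" using FE F_zero by (metis fun_cong zero_fun_def)
  have "(of_int c' :: 'k) \<noteq> 0" using c' by simp
  then show ?case using z by (auto simp: fun_eq_iff)
qed

lemma vs: "vector_space (\<lambda>(c::'k::field) (f::expo \<Rightarrow> 'k). (\<lambda>x. c * f x))"
  by (rule V.vector_space_axioms)

lemma lin_E: "Vector_Spaces.linear (\<lambda>(c::'k::field) (f::expo \<Rightarrow> 'k). (\<lambda>x. c * f x)) (\<lambda>(c::'k::field) (f::expo \<Rightarrow> 'k). (\<lambda>x. c * f x)) (Eop d)"
  unfolding Vector_Spaces.linear_iff using vs by (auto simp: E_add E_scale)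

lemma lin_EF: "Vector_Spaces.linear (\<lambda>(c::'k::field) (f::expo \<Rightarrow> 'k). (\<lambda>x. c * f x)) (\<lambda>(c::'k::field) (f::expo \<Rightarrow> 'k). (\<lambda>x. c * f x)) (\<lambda>P. Eop d (Fop d P))"
  unfolding Vector_Spaces.linear_iff using vs by (auto simp: E_add E_scale F_add F_scale)

lemma zero_Ssgn: "0 \<in> Ssgn d j"
  by (auto simp: Ssgn_def Adeg_def sign_isotypic_def act_def fun_eq_iff)

lemma subspace_Ssgn: "V.subspace (Ssgn d j :: (expo \<Rightarrow> 'k::field) set)"
  unfolding V.subspace_def
proof (intro conjI ballI allI)
  show "0 \<in> (Ssgn d j :: (expo \<Rightarrow> 'k) set)" by (rule zero_Ssgn)
  fix x y :: "expo \<Rightarrow> 'k" and c :: 'k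
  assume x: "x \<in> Ssgn d j"
  then show "(\<lambda>e. c * x e) \<in> Ssgn d j" by (auto simp: Ssgn_def intro: Adeg_scale sign_iso_scale)
  assume y: "y \<in> Ssgn d j"
  show "x + y \<in> Ssgn d j" using x y
    by (auto simp: Ssgn_def Adeg_def sign_isotypic_def act_def fun_eq_iff algebra_simps)
qed

lemma dim_le_fin:
  fixes S T W :: "(expo \<Rightarrow> 'k::field) set"
  assumes "S \<subseteq> T" "T \<subseteq> V.span W" "finite W"
  shows "V.dim S \<le> V.dim T"
proof -
  obtain B where B: "B \<subseteq> S" "V.independent B" "S \<subseteq> V.span B" "card B = V.dim S"
    using V.basis_exists by blast
  obtain B' where B': "B' \<subseteq> T" "V.independent B'" "T \<subseteq> V.span B'" "card B' = V.dim T"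
    using V.basis_exists by blast
  have "finite B'" using V.independent_span_bound[OF assms(3) B'(2)] B'(1) assms(2) by auto
  moreover have "B \<subseteq> V.span B'" using B(1) assms(1) B'(3) by auto
  ultimately have "card B \<le> card B'" using V.independent_span_bound[OF _ B(2)] by blast
  then show ?thesis using B(4) B'(4) by simp
qed

lemma dim_zero: "V.dim {0 :: expo \<Rightarrow> 'k::field} = 0"
proof -
  have "V.span {} = V.span {0 :: expo \<Rightarrow> 'k}" using V.span_empty V.span_span by metis
  then show ?thesis using V.dim_eq_card[of "{}" "{0 :: expo \<Rightarrow> 'k}"] V.independent_empty by simp
qed

lemma Pplus_neg: "Pplus l (-1) = {}"
  by (auto simp: Pplus_def)

theorem theorem3p2:
  fixes d j :: nat
  assumes "d \<ge> 3" and "j \<le> (3 * (d - 1)) div 2"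
  shows "sign_part d j =
           {P :: expo \<Rightarrow> 'k::{alg_closed_field, field_char_0}.
              (\<exists>\<beta>. P = (\<Sum>\<mu>\<in>Pplus (d - 1) (int j). (\<lambda>e. \<beta> \<mu> * alt \<mu> e))) \<and> Eop d P = 0}
       \<and> int (sign_mult TYPE('k) d j) = int (pplus (d - 1) (int j)) - int (pplus (d - 1) (int j - 1))"
proof
  have SP: "\<And>j. (sign_part d j :: (expo \<Rightarrow> 'k) set) = {P \<in> Ssgn d j. Eop d P = 0}"
    by (auto simp: sign_part_def kerE_def Ssgn_def)
  show "sign_part d j =
           {P :: expo \<Rightarrow> 'k.
              (\<exists>\<beta>. P = (\<Sum>\<mu>\<in>Pplus (d - 1) (int j). (\<lambda>e. \<beta> \<mu> * alt \<mu> e))) \<and> Eop d P = 0}"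
    unfolding SP using Ssgn_char[where 'k='k] by blast
  have W: "\<And>j. (Ssgn d j :: (expo \<Rightarrow> 'k) set) \<subseteq> V.span ((alt :: _ \<Rightarrow> expo \<Rightarrow> 'k) ` Pplus (d-1) (int j))"
    by (subst span_alts) (rule order_refl)
  have finW: "\<And>j. finite ((alt :: _ \<Rightarrow> expo \<Rightarrow> 'k) ` Pplus (d-1) (int j))" by (simp add: finite_Pplus)
  have RN: "V.dim (Ssgn d j :: (expo \<Rightarrow> 'k) set) = V.dim (sign_part d j :: (expo \<Rightarrow> 'k) set) + V.dim (Eop d ` (Ssgn d j :: (expo \<Rightarrow> 'k) set))"
    using rank_nullity[OF lin_E subspace_Ssgn finW W] SP by simp
  have IM: "V.dim (Eop d ` (Ssgn d j :: (expo \<Rightarrow> 'k) set)) = pplus (d-1) (int j - 1)"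
  proof (cases j)
    case 0
    have "Eop d ` (Ssgn d j :: (expo \<Rightarrow> 'k) set) = {0}"
      using zero_Ssgn E_deg0 0 by (force simp: Ssgn_def)
    then show ?thesis using 0 dim_zero by (simp add: pplus_def Pplus_neg)
  next
    case (Suc m)
    have sub: "Eop d ` (Ssgn d j :: (expo \<Rightarrow> 'k) set) \<subseteq> Ssgn d m"
      using Suc by (auto simp: Ssgn_def intro: E_deg sign_iso_E)
    have le: "V.dim (Eop d ` (Ssgn d j :: (expo \<Rightarrow> 'k) set)) \<le> pplus (d-1) (int m)"
      using dim_le_fin[OF sub W finW] dim_Ssgn[of d m, where 'k='k] by simp
    have sub2: "(\<lambda>P. Eop d (Fop d P)) ` (Ssgn d m :: (expo \<Rightarrow> 'k) set) \<subseteq> Eop d ` Ssgn d j"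
      using Suc by (auto simp: Ssgn_def intro: F_deg sign_iso_F)
    have sub3: "Eop d ` (Ssgn d j :: (expo \<Rightarrow> 'k) set) \<subseteq> V.span ((alt :: _ \<Rightarrow> expo \<Rightarrow> 'k) ` Pplus (d-1) (int m))"
      using sub W by blast
    have m: "2 * m < 3 * (d - 1)" using assms(2) Suc by simp
    have ker: "{P \<in> (Ssgn d m :: (expo \<Rightarrow> 'k) set). Eop d (Fop d P) = 0} = {0}"
    proof
      show "{P \<in> (Ssgn d m :: (expo \<Rightarrow> 'k) set). Eop d (Fop d P) = 0} \<subseteq> {0}"
      proof
        fix P :: "expo \<Rightarrow> 'k" assume "P \<in> {P \<in> Ssgn d m. Eop d (Fop d P) = 0}"
        then have P: "P \<in> Adeg d m" "Eop d (Fop d P) = (\<lambda>e. of_int 0 * P e)" by (auto simp: Ssgn_def zero_fun_def)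
        show "P \<in> {0}" using EF_inj[OF m P(1) _ P(2)] by simp
      qed
      show "{0} \<subseteq> {P \<in> (Ssgn d m :: (expo \<Rightarrow> 'k) set). Eop d (Fop d P) = 0}"
        using zero_Ssgn by (simp add: F_zero E_zero)
    qed
    have RN2: "V.dim (Ssgn d m :: (expo \<Rightarrow> 'k) set) = V.dim {P \<in> (Ssgn d m :: (expo \<Rightarrow> 'k) set). Eop d (Fop d P) = 0}
        + V.dim ((\<lambda>P. Eop d (Fop d P)) ` (Ssgn d m :: (expo \<Rightarrow> 'k) set))"
      by (rule rank_nullity[OF lin_EF subspace_Ssgn finW W])
    then have "V.dim ((\<lambda>P. Eop d (Fop d P)) ` (Ssgn d m :: (expo \<Rightarrow> 'k) set)) = pplus (d-1) (int m)"
      using ker dim_zero dim_Ssgn[of d m, where 'k='k] by simp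
    moreover have "V.dim ((\<lambda>P. Eop d (Fop d P)) ` (Ssgn d m :: (expo \<Rightarrow> 'k) set)) \<le> V.dim (Eop d ` (Ssgn d j :: (expo \<Rightarrow> 'k) set))"
      by (rule dim_le_fin[OF sub2 sub3 finW])
    ultimately show ?thesis using le Suc by simp
  qed
  have "sign_mult TYPE('k) d j = V.dim (sign_part d j :: (expo \<Rightarrow> 'k) set)" by (simp add: sign_mult_def)
  then show "int (sign_mult TYPE('k) d j) = int (pplus (d - 1) (int j)) - int (pplus (d - 1) (int j - 1))"
    using RN IM dim_Ssgn[of d j, where 'k='k] by simp
qed
end
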